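(* Let $Q$ be a commutative automorphic loop of nilpotency class $3$. Then $(a,(b,c,d),(e,f,g))=((a,b,c),d,(e,f,g))=((a,b,c),(d,e,f),g)=1$ for every $a,b,c,d,e,f,g\in Q$.
   Context: A loop is a set with a binary operation such that all left and right translations $L_a:b\mapsto ab$, $R_a:b\mapsto ba$ are bijections and there is a two-sided identity $1$. The inner mapping group is the stabilizer of $1$ in the group generated by all translations; $Q$ is automorphic if all inner mappings are automorphisms. The associator $(a,b,c)$ is defined by $(ab)c=(a(bc))(a,b,c)$. The center $Z(Q)$ is the set of elements fixed by all inner mappings; $Z_0=1$, $Z_{i+1}(Q)$ is the preimage of $Z(Q/Z_i(Q))$, and $Q$ has nilpotency class $n$ if $Z_{n-1}(Q)\neq Q=Z_n(Q)$. *)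

theory Defs
  imports Main
begin

definition loop :: "'a set \<Rightarrow> ('a \<Rightarrow> 'a \<Rightarrow> 'a) \<Rightarrow> 'a \<Rightarrow> bool" where
  "loop S m u \<longleftrightarrow> u \<in> S \<and> (\<forall>a\<in>S. \<forall>b\<in>S. m a b \<in> S)
     \<and> (\<forall>a\<in>S. bij_betw (m a) S S) \<and> (\<forall>a\<in>S. bij_betw (\<lambda>b. m b a) S S)
     \<and> (\<forall>a\<in>S. m u a = a \<and> m a u = a)"

text \<open>Translations and their inverses, as permutations of the whole type fixing everything
  outside the carrier.\<close>

definition Ltr :: "'a set \<Rightarrow> ('a \<Rightarrow> 'a \<Rightarrow> 'a) \<Rightarrow> 'a \<Rightarrow> 'a \<Rightarrow> 'a" where
  "Ltr S m a = (\<lambda>b. if b \<in> S then m a b else b)"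

definition Rtr :: "'a set \<Rightarrow> ('a \<Rightarrow> 'a \<Rightarrow> 'a) \<Rightarrow> 'a \<Rightarrow> 'a \<Rightarrow> 'a" where
  "Rtr S m a = (\<lambda>b. if b \<in> S then m b a else b)"

definition Ltr_inv :: "'a set \<Rightarrow> ('a \<Rightarrow> 'a \<Rightarrow> 'a) \<Rightarrow> 'a \<Rightarrow> 'a \<Rightarrow> 'a" where
  "Ltr_inv S m a = (\<lambda>b. if b \<in> S then inv_into S (m a) b else b)"

definition Rtr_inv :: "'a set \<Rightarrow> ('a \<Rightarrow> 'a \<Rightarrow> 'a) \<Rightarrow> 'a \<Rightarrow> 'a \<Rightarrow> 'a" where
  "Rtr_inv S m a = (\<lambda>b. if b \<in> S then inv_into S (\<lambda>x. m x a) b else b)"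

inductive_set Mlt :: "'a set \<Rightarrow> ('a \<Rightarrow> 'a \<Rightarrow> 'a) \<Rightarrow> ('a \<Rightarrow> 'a) set"
  for S m where
  Mlt_id: "id \<in> Mlt S m"
| Mlt_L: "f \<in> Mlt S m \<Longrightarrow> a \<in> S \<Longrightarrow> Ltr S m a \<circ> f \<in> Mlt S m"
| Mlt_R: "f \<in> Mlt S m \<Longrightarrow> a \<in> S \<Longrightarrow> Rtr S m a \<circ> f \<in> Mlt S m"
| Mlt_Linv: "f \<in> Mlt S m \<Longrightarrow> a \<in> S \<Longrightarrow> Ltr_inv S m a \<circ> f \<in> Mlt S m"
| Mlt_Rinv: "f \<in> Mlt S m \<Longrightarrow> a \<in> S \<Longrightarrow> Rtr_inv S m a \<circ> f \<in> Mlt S m"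

definition Inn :: "'a set \<Rightarrow> ('a \<Rightarrow> 'a \<Rightarrow> 'a) \<Rightarrow> 'a \<Rightarrow> ('a \<Rightarrow> 'a) set" where
  "Inn S m u = {f \<in> Mlt S m. f u = u}"

definition automorphic :: "'a set \<Rightarrow> ('a \<Rightarrow> 'a \<Rightarrow> 'a) \<Rightarrow> 'a \<Rightarrow> bool" where
  "automorphic S m u \<longleftrightarrow> loop S m u \<and>
     (\<forall>f\<in>Inn S m u. bij_betw f S S \<and> (\<forall>a\<in>S. \<forall>b\<in>S. f (m a b) = m (f a) (f b)))"

definition commutative_loop :: "'a set \<Rightarrow> ('a \<Rightarrow> 'a \<Rightarrow> 'a) \<Rightarrow> 'a \<Rightarrow> bool" where
  "commutative_loop S m u \<longleftrightarrow> loop S m u \<and> (\<forall>a\<in>S. \<forall>b\<in>S. m a b = m b a)"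

definition assoc :: "'a set \<Rightarrow> ('a \<Rightarrow> 'a \<Rightarrow> 'a) \<Rightarrow> 'a \<Rightarrow> 'a \<Rightarrow> 'a \<Rightarrow> 'a" where
  "assoc S m a b c = (THE z. z \<in> S \<and> m (m a b) c = m (m a (m b c)) z)"

definition center :: "'a set \<Rightarrow> ('a \<Rightarrow> 'a \<Rightarrow> 'a) \<Rightarrow> 'a \<Rightarrow> 'a set" where
  "center S m u = {x \<in> S. \<forall>f\<in>Inn S m u. f x = x}"

definition quot_carrier :: "'a set \<Rightarrow> ('a \<Rightarrow> 'a \<Rightarrow> 'a) \<Rightarrow> 'a set \<Rightarrow> 'a set set" where
  "quot_carrier S m N = (\<lambda>x. m x ` N) ` S"

definition quot_mult :: "('a \<Rightarrow> 'a \<Rightarrow> 'a) \<Rightarrow> 'a set \<Rightarrow> 'a set \<Rightarrow> 'a set \<Rightarrow> 'a set" where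
  "quot_mult m N A B = m (m (SOME a. a \<in> A) (SOME b. b \<in> B)) ` N"

fun upper_center :: "'a set \<Rightarrow> ('a \<Rightarrow> 'a \<Rightarrow> 'a) \<Rightarrow> 'a \<Rightarrow> nat \<Rightarrow> 'a set" where
  "upper_center S m u 0 = {u}"
| "upper_center S m u (Suc i) =
     (let N = upper_center S m u i in
       {x \<in> S. m x ` N \<in> center (quot_carrier S m N) (quot_mult m N) N})"

definition nilpotency_class :: "'a set \<Rightarrow> ('a \<Rightarrow> 'a \<Rightarrow> 'a) \<Rightarrow> 'a \<Rightarrow> nat \<Rightarrow> bool" where
  "nilpotency_class S m u n \<longleftrightarrow> upper_center S m u n = S \<and>
     (n > 0 \<longrightarrow> upper_center S m u (n - 1) \<noteq> S)"

end

theory Submission imports Defs begin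

locale CAL =
  fixes S :: "'a set" and m :: "'a \<Rightarrow> 'a \<Rightarrow> 'a" and u :: 'a
  assumes cl: "commutative_loop S m u" and au: "automorphic S m u"
begin

lemma lp: "loop S m u" using cl unfolding commutative_loop_def by simp
lemma u_in [simp]: "u \<in> S" using lp unfolding loop_def by simp
lemma m_in [simp]: "a \<in> S \<Longrightarrow> b \<in> S \<Longrightarrow> m a b \<in> S" using lp unfolding loop_def by simp
lemma bijL: "a \<in> S \<Longrightarrow> bij_betw (m a) S S" using lp unfolding loop_def by simp
lemma bijR: "a \<in> S \<Longrightarrow> bij_betw (\<lambda>b. m b a) S S" using lp unfolding loop_def by simp
lemma lu [simp]: "a \<in> S \<Longrightarrow> m u a = a" using lp unfolding loop_def by simp
lemma ru [simp]: "a \<in> S \<Longrightarrow> m a u = a" using lp unfolding loop_def by simp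
lemma comm: "a \<in> S \<Longrightarrow> b \<in> S \<Longrightarrow> m a b = m b a" using cl unfolding commutative_loop_def by simp

lemma cancelL: "a \<in> S \<Longrightarrow> x \<in> S \<Longrightarrow> y \<in> S \<Longrightarrow> m a x = m a y \<Longrightarrow> x = y"
  using bijL[of a] unfolding bij_betw_def inj_on_def by blast
lemma cancelR: "a \<in> S \<Longrightarrow> x \<in> S \<Longrightarrow> y \<in> S \<Longrightarrow> m x a = m y a \<Longrightarrow> x = y"
  using cancelL comm by metis

definition ld where "ld a b = Ltr_inv S m a b"
definition rd where "rd a b = Rtr_inv S m a b"

lemma ld_in [simp]: "a \<in> S \<Longrightarrow> b \<in> S \<Longrightarrow> ld a b \<in> S"
  unfolding ld_def Ltr_inv_def using bijL[of a] by (simp add: bij_betw_def inv_into_into)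
lemma ld_eq [simp]: "a \<in> S \<Longrightarrow> b \<in> S \<Longrightarrow> m a (ld a b) = b"
  unfolding ld_def Ltr_inv_def using bijL[of a] by (simp add: bij_betw_inv_into_right)
lemma ld_m [simp]: "a \<in> S \<Longrightarrow> b \<in> S \<Longrightarrow> ld a (m a b) = b"
  by (meson cancelL ld_eq ld_in m_in)
lemma rd_in [simp]: "a \<in> S \<Longrightarrow> b \<in> S \<Longrightarrow> rd a b \<in> S"
  unfolding rd_def Rtr_inv_def using bijR[of a] by (simp add: bij_betw_def inv_into_into)
lemma rd_eq [simp]: "a \<in> S \<Longrightarrow> b \<in> S \<Longrightarrow> m (rd a b) a = b"
  unfolding rd_def Rtr_inv_def using bij_betw_inv_into_right[OF bijR[of a], of b] by simp

lemma Ltr_app [simp]: "b \<in> S \<Longrightarrow> Ltr S m a b = m a b" by (simp add: Ltr_def)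
lemma Rtr_app [simp]: "b \<in> S \<Longrightarrow> Rtr S m a b = m b a" by (simp add: Rtr_def)
lemma Ltr_inv_app [simp]: "Ltr_inv S m a b = ld a b" by (simp add: ld_def)
lemma Rtr_inv_app [simp]: "Rtr_inv S m a b = rd a b" by (simp add: rd_def)

lemma Mlt_in: "f \<in> Mlt S m \<Longrightarrow> x \<in> S \<Longrightarrow> f x \<in> S"
  by (induction f arbitrary: x rule: Mlt.induct) auto

lemma Mlt_comp: "f \<in> Mlt S m \<Longrightarrow> g \<in> Mlt S m \<Longrightarrow> f \<circ> g \<in> Mlt S m"
  by (induction f rule: Mlt.induct) (auto simp: comp_assoc intro: Mlt.intros)

lemma L_Mlt: "a \<in> S \<Longrightarrow> Ltr S m a \<in> Mlt S m" using Mlt_L[OF Mlt_id] by simp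
lemma R_Mlt: "a \<in> S \<Longrightarrow> Rtr S m a \<in> Mlt S m" using Mlt_R[OF Mlt_id] by simp
lemma Li_Mlt: "a \<in> S \<Longrightarrow> Ltr_inv S m a \<in> Mlt S m" using Mlt_Linv[OF Mlt_id] by simp
lemma Ri_Mlt: "a \<in> S \<Longrightarrow> Rtr_inv S m a \<in> Mlt S m" using Mlt_Rinv[OF Mlt_id] by simp

lemma Inn_Mlt: "t \<in> Inn S m u \<Longrightarrow> t \<in> Mlt S m" by (simp add: Inn_def)
lemma Inn_u: "t \<in> Inn S m u \<Longrightarrow> t u = u" by (simp add: Inn_def)
lemma Inn_in: "t \<in> Inn S m u \<Longrightarrow> x \<in> S \<Longrightarrow> t x \<in> S" using Inn_Mlt Mlt_in by blast
lemma Inn_hom: "t \<in> Inn S m u \<Longrightarrow> a \<in> S \<Longrightarrow> b \<in> S \<Longrightarrow> t (m a b) = m (t a) (t b)"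
  using au unfolding automorphic_def by blast
lemma Inn_comp: "t \<in> Inn S m u \<Longrightarrow> s \<in> Inn S m u \<Longrightarrow> t \<circ> s \<in> Inn S m u"
  unfolding Inn_def using Mlt_comp by auto

lemma inner_part: "f \<in> Mlt S m \<Longrightarrow> Ltr_inv S m (f u) \<circ> f \<in> Inn S m u"
proof -
  assume f: "f \<in> Mlt S m"
  have fu: "f u \<in> S" using Mlt_in[OF f] by simp
  have "Ltr_inv S m (f u) \<circ> f \<in> Mlt S m" using Mlt_Linv[OF f fu] .
  moreover have "(Ltr_inv S m (f u) \<circ> f) u = u" using fu ld_m[OF fu u_in] by simp
  ultimately show ?thesis unfolding Inn_def by simp
qed

lemma decomp: "f \<in> Mlt S m \<Longrightarrow> x \<in> S \<Longrightarrow> f x = m (f u) ((Ltr_inv S m (f u) \<circ> f) x)"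
  using Mlt_in by simp


lemma rd_m [simp]: "a \<in> S \<Longrightarrow> b \<in> S \<Longrightarrow> rd a (m b a) = b"
  by (meson cancelR rd_eq rd_in m_in)

lemma assoc_prop: assumes a: "a \<in> S" and b: "b \<in> S" and c: "c \<in> S"
  shows "assoc S m a b c \<in> S \<and> m (m a b) c = m (m a (m b c)) (assoc S m a b c)"
proof -
  let ?K = "m a (m b c)" and ?P = "m (m a b) c"
  have KS: "?K \<in> S" and PS: "?P \<in> S" using a b c by auto
  have "\<exists>!z. z \<in> S \<and> ?P = m ?K z"
  proof
    show "ld ?K ?P \<in> S \<and> ?P = m ?K (ld ?K ?P)" using KS PS by simp
    fix z assume "z \<in> S \<and> ?P = m ?K z"
    thus "z = ld ?K ?P" using KS by simp
  qed
  hence "assoc S m a b c \<in> S \<and> ?P = m ?K (assoc S m a b c)" unfolding assoc_def by (rule theI')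
  thus ?thesis .
qed

lemma assoc_u: assumes "a \<in> S" "b \<in> S" "c \<in> S" "m (m a b) c = m a (m b c)"
  shows "assoc S m a b c = u"
proof -
  have "m (m a (m b c)) (assoc S m a b c) = m (m a (m b c)) u" using assoc_prop[OF assms(1-3)] assms by simp
  thus ?thesis using cancelL assoc_prop[OF assms(1-3)] assms by (meson m_in u_in)
qed

definition normal where "normal N \<longleftrightarrow> N \<subseteq> S \<and> u \<in> N \<and> (\<forall>a\<in>N. \<forall>b\<in>N. m a b \<in> N)
   \<and> (\<forall>a\<in>N. \<forall>b\<in>N. ld a b \<in> N) \<and> (\<forall>t\<in>Inn S m u. \<forall>n\<in>N. t n \<in> N)"
definition cs where "cs N x = m x ` N"
definition CC where "CC N = {x\<in>S. \<forall>t\<in>Inn S m u. t x \<in> cs N x}"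

lemma CC_D: assumes "x \<in> CC N" "t \<in> Inn S m u" shows "t x \<in> cs N x"
proof -
  from assms(1) have "\<forall>t\<in>Inn S m u. t x \<in> cs N x" unfolding CC_def by simp
  thus ?thesis using assms(2) by (rule bspec)
qed
lemma CC_S: "x \<in> CC N \<Longrightarrow> x \<in> S" unfolding CC_def by simp
lemma CC_I: "x \<in> S \<Longrightarrow> (\<And>t. t \<in> Inn S m u \<Longrightarrow> t x \<in> cs N x) \<Longrightarrow> x \<in> CC N"
  unfolding CC_def by simp

context fixes N assumes nN: "normal N"
begin

lemma NS: "n \<in> N \<Longrightarrow> n \<in> S" using nN unfolding normal_def by blast
lemma uN: "u \<in> N" using nN unfolding normal_def by blast
lemma mN: "a \<in> N \<Longrightarrow> b \<in> N \<Longrightarrow> m a b \<in> N" using nN unfolding normal_def by blast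
lemma ldN: "a \<in> N \<Longrightarrow> b \<in> N \<Longrightarrow> ld a b \<in> N" using nN unfolding normal_def by blast
lemma innN: "t \<in> Inn S m u \<Longrightarrow> n \<in> N \<Longrightarrow> t n \<in> N" using nN unfolding normal_def by blast

lemma cs_sub: "x \<in> S \<Longrightarrow> y \<in> cs N x \<Longrightarrow> y \<in> S" unfolding cs_def using NS by auto
lemma self_cs: "x \<in> S \<Longrightarrow> x \<in> cs N x" unfolding cs_def using uN ru[of x] by (auto simp: image_def intro!: bexI[of _ u])
lemma csu: "cs N u = N" unfolding cs_def using NS lu by (simp add: image_def)

lemma lemA: assumes f: "f \<in> Mlt S m" and x: "x \<in> S" and n: "n \<in> N"
  shows "f (m x n) \<in> cs N (f x)"
proof -
  define g where "g = f \<circ> Ltr S m x"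
  have g: "g \<in> Mlt S m" unfolding g_def by (rule Mlt_comp[OF f L_Mlt[OF x]])
  have gu: "g u = f x" unfolding g_def using x by simp
  have t: "Ltr_inv S m (g u) \<circ> g \<in> Inn S m u" by (rule inner_part[OF g])
  have "g n = m (g u) ((Ltr_inv S m (g u) \<circ> g) n)" using decomp[OF g] NS[OF n] by blast
  moreover have "g n = f (m x n)" unfolding g_def using NS[OF n] by simp
  moreover have "(Ltr_inv S m (g u) \<circ> g) n \<in> N" using innN[OF t n] .
  ultimately show ?thesis unfolding cs_def gu by auto
qed

lemma cs_sym: assumes x: "x \<in> S" and y: "y \<in> cs N x" shows "x \<in> cs N y"
proof -
  obtain n where n: "n \<in> N" and yx: "y = m x n" using y unfolding cs_def by auto
  have nS: "n \<in> S" using NS[OF n] .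
  have yS: "y \<in> S" using yx x nS by simp
  define g where "g = Ltr_inv S m y \<circ> Ltr S m x"
  have g: "g \<in> Mlt S m" unfolding g_def by (rule Mlt_comp[OF Li_Mlt[OF yS] L_Mlt[OF x]])
  have gu: "g u = ld y x" unfolding g_def using x by simp
  have gn: "g n = u" unfolding g_def using nS yS yx ld_m[OF yS u_in] by simp
  have t: "Ltr_inv S m (g u) \<circ> g \<in> Inn S m u" by (rule inner_part[OF g])
  define k where "k = ld y x"
  have kS: "k \<in> S" unfolding k_def using x yS by simp
  have tn: "(Ltr_inv S m (g u) \<circ> g) n \<in> N" using innN[OF t n] .
  have e: "u = m k ((Ltr_inv S m (g u) \<circ> g) n)" using decomp[OF g nS] gn gu k_def by simp
  have "k = ld ((Ltr_inv S m (g u) \<circ> g) n) u"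
    using e comm[OF kS NS[OF tn]] ld_m[OF NS[OF tn] kS] by simp
  hence kN: "k \<in> N" using ldN[OF tn uN] by simp
  have "x = m y k" unfolding k_def using x yS by simp
  thus ?thesis unfolding cs_def using kN by auto
qed

lemma cs_incl: assumes x: "x \<in> S" and y: "y \<in> cs N x" shows "cs N x \<subseteq> cs N y"
proof
  fix z assume "z \<in> cs N x"
  then obtain n' where n': "n' \<in> N" "z = m x n'" unfolding cs_def by auto
  obtain n where n: "n \<in> N" and yx: "y = m x n" using y unfolding cs_def by auto
  define k where "k = ld n n'"
  have kN: "k \<in> N" unfolding k_def using ldN n n' by simp
  have "n' = m n k" unfolding k_def using NS n n' by simp
  hence "z = Ltr S m x (m n k)" using n' NS n kN by simp
  also have "\<dots> \<in> cs N (Ltr S m x n)" by (rule lemA[OF L_Mlt[OF x] NS[OF n] kN])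
  finally show "z \<in> cs N y" using yx NS[OF n] by simp
qed

lemma cs_eq: assumes "x \<in> S" "y \<in> cs N x" shows "cs N y = cs N x"
proof (rule subset_antisym)
  show "cs N x \<subseteq> cs N y" by (rule cs_incl[OF assms])
  have yS: "y \<in> S" by (rule cs_sub[OF assms])
  show "cs N y \<subseteq> cs N x" by (rule cs_incl[OF yS cs_sym[OF assms]])
qed

lemma cs_trans: "x \<in> S \<Longrightarrow> y \<in> cs N x \<Longrightarrow> z \<in> cs N y \<Longrightarrow> z \<in> cs N x"
  using cs_eq by blast

lemma lemB: assumes x: "x \<in> S" and y: "y \<in> S" and x': "x' \<in> cs N x" and y': "y' \<in> cs N y"
  shows "m x' y' \<in> cs N (m x y)"
proof -
  obtain n1 where n1: "n1 \<in> N" "x' = m x n1" using x' unfolding cs_def by auto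
  obtain n2 where n2: "n2 \<in> N" "y' = m y n2" using y' unfolding cs_def by auto
  have y'S: "y' \<in> S" using n2 NS y by simp
  have "m x' y' = Rtr S m y' (m x n1)" using n1 NS x by simp
  also have "\<dots> \<in> cs N (Rtr S m y' x)" by (rule lemA[OF R_Mlt[OF y'S] x n1(1)])
  also have "Rtr S m y' x = m x y'" using x by simp
  finally have 1: "m x' y' \<in> cs N (m x y')" .
  have "m x y' = Ltr S m x (m y n2)" using n2 NS y by simp
  also have "\<dots> \<in> cs N (Ltr S m x y)" by (rule lemA[OF L_Mlt[OF x] y n2(1)])
  finally have 2: "m x y' \<in> cs N (m x y)" using y by simp
  show ?thesis using cs_trans[OF _ 2 1] x y by simp
qed

lemma lemC: assumes x: "x \<in> S" and w: "w \<in> S" and z: "z \<in> S" and h: "m x w \<in> cs N (m x z)"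
  shows "w \<in> cs N z"
proof -
  obtain n where n: "n \<in> N" "m x w = m (m x z) n" using h unfolding cs_def by auto
  have "w = Ltr_inv S m x (m (m x z) n)" using n(2)[symmetric] x w by simp
  also have "\<dots> \<in> cs N (Ltr_inv S m x (m x z))" by (rule lemA[OF Li_Mlt[OF x] _ n(1)]) (simp add: x z)
  finally show ?thesis using x z by simp
qed

lemma lemD: assumes x: "x \<in> CC N" and f: "f \<in> Mlt S m" shows "f x \<in> cs N (m (f u) x)"
proof -
  have xS: "x \<in> S" using x unfolding CC_def by simp
  have fu: "f u \<in> S" using Mlt_in[OF f] by simp
  have t: "Ltr_inv S m (f u) \<circ> f \<in> Inn S m u" by (rule inner_part[OF f])
  have tx: "(Ltr_inv S m (f u) \<circ> f) x \<in> cs N x" by (rule CC_D[OF x t])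
  have "m (f u) ((Ltr_inv S m (f u) \<circ> f) x) \<in> cs N (m (f u) x)"
    by (rule lemB[OF fu xS self_cs[OF fu] tx])
  thus ?thesis by (simp only: decomp[OF f xS, symmetric])
qed

lemma CC_normal: "normal (CC N)"
proof -
  have sub: "CC N \<subseteq> S" using CC_S by blast
  have u: "u \<in> CC N"
  proof (rule CC_I[OF u_in])
    fix t assume t: "t \<in> Inn S m u"
    show "t u \<in> cs N u" unfolding Inn_u[OF t] by (rule self_cs[OF u_in])
  qed
  have mul: "m a b \<in> CC N" if a: "a \<in> CC N" and b: "b \<in> CC N" for a b
  proof -
    have aS: "a \<in> S" and bS: "b \<in> S" using a b CC_S by auto
    show ?thesis
    proof (rule CC_I)
      show "m a b \<in> S" using aS bS by simp
      fix t assume t: "t \<in> Inn S m u"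
      have "t (m a b) = m (t a) (t b)" using Inn_hom[OF t aS bS] .
      also have "\<dots> \<in> cs N (m a b)" by (rule lemB[OF aS bS CC_D[OF a t] CC_D[OF b t]])
      finally show "t (m a b) \<in> cs N (m a b)" .
    qed
  qed
  have div: "ld a b \<in> CC N" if a: "a \<in> CC N" and b: "b \<in> CC N" for a b
  proof -
    have aS: "a \<in> S" and bS: "b \<in> S" using a b CC_S by auto
    define z where "z = ld a b"
    have zS: "z \<in> S" unfolding z_def using aS bS by simp
    have az: "m a z = b" unfolding z_def using aS bS by simp
    have "z \<in> CC N"
    proof (rule CC_I[OF zS])
      fix t assume t: "t \<in> Inn S m u"
      have ta: "t a \<in> cs N a" and tb: "t b \<in> cs N b" using CC_D[OF a t] CC_D[OF b t] by auto
      have taS: "t a \<in> S" and tzS: "t z \<in> S" using Inn_in[OF t] aS zS by auto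
      have "m (t a) (t z) = t b" using Inn_hom[OF t aS zS] az by simp
      hence 1: "m (t a) (t z) \<in> cs N (m a z)" using tb az by simp
      have 2: "m (t a) z \<in> cs N (m a z)" by (rule lemB[OF aS zS ta self_cs[OF zS]])
      have "cs N (m (t a) z) = cs N (m a z)" by (rule cs_eq[OF _ 2]) (simp add: aS zS)
      hence "m (t a) (t z) \<in> cs N (m (t a) z)" using 1 by simp
      thus "t z \<in> cs N z" by (rule lemC[OF taS tzS zS])
    qed
    thus ?thesis unfolding z_def .
  qed
  have inv: "s x \<in> CC N" if s: "s \<in> Inn S m u" and x: "x \<in> CC N" for s x
  proof -
    have xS: "x \<in> S" using x CC_S by auto
    have sx: "s x \<in> cs N x" by (rule CC_D[OF x s])
    show ?thesis
    proof (rule CC_I)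
      show "s x \<in> S" using Inn_in[OF s xS] .
      fix t assume t: "t \<in> Inn S m u"
      have "(t \<circ> s) x \<in> cs N x" by (rule CC_D[OF x Inn_comp[OF t s]])
      thus "t (s x) \<in> cs N (s x)" using cs_eq[OF xS sx] by simp
    qed
  qed
  show ?thesis unfolding normal_def
  proof (intro conjI)
    show "\<forall>a\<in>CC N. \<forall>b\<in>CC N. m a b \<in> CC N" using mul by blast
    show "\<forall>a\<in>CC N. \<forall>b\<in>CC N. ld a b \<in> CC N" using div by blast
    show "\<forall>t\<in>Inn S m u. \<forall>n\<in>CC N. t n \<in> CC N" using inv by blast
  qed (use sub u in auto)
qed


lemma cs_fun: "cs N = (\<lambda>x. m x ` N)" by (rule ext) (simp add: cs_def)
lemma QN_eq: "quot_carrier S m N = cs N ` S" by (simp add: quot_carrier_def cs_fun)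
lemma QN_mem: "x \<in> S \<Longrightarrow> cs N x \<in> quot_carrier S m N" by (simp add: QN_eq)
lemma QN_cases: "X \<in> quot_carrier S m N \<Longrightarrow> \<exists>x\<in>S. X = cs N x" by (auto simp: QN_eq)

lemma qm_cs: assumes x: "x \<in> S" and y: "y \<in> S"
  shows "quot_mult m N (cs N x) (cs N y) = cs N (m x y)"
proof -
  define a where "a = (SOME a. a \<in> cs N x)"
  define b where "b = (SOME b. b \<in> cs N y)"
  have a: "a \<in> cs N x" unfolding a_def by (rule someI[of _ x]) (rule self_cs[OF x])
  have b: "b \<in> cs N y" unfolding b_def by (rule someI[of _ y]) (rule self_cs[OF y])
  have "quot_mult m N (cs N x) (cs N y) = cs N (m a b)"
    unfolding quot_mult_def a_def b_def cs_def ..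
  also have "\<dots> = cs N (m x y)" by (rule cs_eq[OF _ lemB[OF x y a b]]) (simp add: x y)
  finally show ?thesis .
qed

lemma qinjL: assumes a: "a \<in> S" shows "inj_on (quot_mult m N (cs N a)) (quot_carrier S m N)"
proof (rule inj_onI)
  fix X Y assume X: "X \<in> quot_carrier S m N" and Y: "Y \<in> quot_carrier S m N"
    and e: "quot_mult m N (cs N a) X = quot_mult m N (cs N a) Y"
  obtain x where x: "x \<in> S" "X = cs N x" using QN_cases[OF X] by auto
  obtain y where y: "y \<in> S" "Y = cs N y" using QN_cases[OF Y] by auto
  have "cs N (m a x) = cs N (m a y)" using e x y qm_cs a by simp
  hence "m a y \<in> cs N (m a x)" using self_cs[of "m a y"] a y by simp
  hence "y \<in> cs N x" by (rule lemC[OF a y(1) x(1)])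
  hence "cs N y = cs N x" by (rule cs_eq[OF x(1)])
  thus "X = Y" using x y by simp
qed

lemma qinjR: assumes a: "a \<in> S" shows "inj_on (\<lambda>X. quot_mult m N X (cs N a)) (quot_carrier S m N)"
proof (rule inj_onI)
  fix X Y assume X: "X \<in> quot_carrier S m N" and Y: "Y \<in> quot_carrier S m N"
    and e: "quot_mult m N X (cs N a) = quot_mult m N Y (cs N a)"
  obtain x where x: "x \<in> S" "X = cs N x" using QN_cases[OF X] by auto
  obtain y where y: "y \<in> S" "Y = cs N y" using QN_cases[OF Y] by auto
  have "cs N (m x a) = cs N (m y a)" using e x y qm_cs a by simp
  hence "cs N (m a x) = cs N (m a y)" using comm a x y by simp
  hence "m a y \<in> cs N (m a x)" using self_cs[of "m a y"] a y by simp
  hence "y \<in> cs N x" by (rule lemC[OF a y(1) x(1)])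
  hence "cs N y = cs N x" by (rule cs_eq[OF x(1)])
  thus "X = Y" using x y by simp
qed

lemma LQ: "a \<in> S \<Longrightarrow> x \<in> S \<Longrightarrow>
  Ltr (quot_carrier S m N) (quot_mult m N) (cs N a) (cs N x) = cs N (m a x)"
  by (simp add: Ltr_def QN_mem qm_cs)
lemma RQ: "a \<in> S \<Longrightarrow> x \<in> S \<Longrightarrow>
  Rtr (quot_carrier S m N) (quot_mult m N) (cs N a) (cs N x) = cs N (m x a)"
  by (simp add: Rtr_def QN_mem qm_cs)
lemma LiQ: assumes a: "a \<in> S" and x: "x \<in> S"
  shows "Ltr_inv (quot_carrier S m N) (quot_mult m N) (cs N a) (cs N x) = cs N (ld a x)"
proof -
  have "inv_into (quot_carrier S m N) (quot_mult m N (cs N a)) (cs N x) = cs N (ld a x)"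
    by (rule inv_into_f_eq[OF qinjL[OF a] QN_mem]) (simp_all add: a x qm_cs)
  thus ?thesis unfolding Ltr_inv_def using QN_mem[OF x] by simp
qed
lemma RiQ: assumes a: "a \<in> S" and x: "x \<in> S"
  shows "Rtr_inv (quot_carrier S m N) (quot_mult m N) (cs N a) (cs N x) = cs N (rd a x)"
proof -
  have "inv_into (quot_carrier S m N) (\<lambda>X. quot_mult m N X (cs N a)) (cs N x) = cs N (rd a x)"
    by (rule inv_into_f_eq[OF qinjR[OF a] QN_mem]) (simp_all add: a x qm_cs)
  thus ?thesis unfolding Rtr_inv_def using QN_mem[OF x] by simp
qed

lemma lift_down: "f \<in> Mlt S m \<Longrightarrow>
  \<exists>F \<in> Mlt (quot_carrier S m N) (quot_mult m N). \<forall>x\<in>S. F (cs N x) = cs N (f x)"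
proof (induction f rule: Mlt.induct)
  case Mlt_id show ?case by (rule bexI[of _ id]) (simp_all add: Mlt.Mlt_id)
next
  case (Mlt_L f a)
  then obtain F where F: "F \<in> Mlt (quot_carrier S m N) (quot_mult m N)" "\<forall>x\<in>S. F (cs N x) = cs N (f x)" by blast
  show ?case
    by (rule bexI[of _ "Ltr (quot_carrier S m N) (quot_mult m N) (cs N a) \<circ> F"])
       (use F Mlt_L Mlt_in LQ QN_mem in \<open>auto intro: Mlt.Mlt_L\<close>)
next
  case (Mlt_R f a)
  then obtain F where F: "F \<in> Mlt (quot_carrier S m N) (quot_mult m N)" "\<forall>x\<in>S. F (cs N x) = cs N (f x)" by blast
  show ?case
    by (rule bexI[of _ "Rtr (quot_carrier S m N) (quot_mult m N) (cs N a) \<circ> F"])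
       (use F Mlt_R Mlt_in RQ QN_mem in \<open>auto intro: Mlt.Mlt_R\<close>)
next
  case (Mlt_Linv f a)
  then obtain F where F: "F \<in> Mlt (quot_carrier S m N) (quot_mult m N)" "\<forall>x\<in>S. F (cs N x) = cs N (f x)" by blast
  show ?case
    by (rule bexI[of _ "Ltr_inv (quot_carrier S m N) (quot_mult m N) (cs N a) \<circ> F"])
       (use F Mlt_Linv Mlt_in LiQ QN_mem in \<open>auto intro: Mlt.Mlt_Linv\<close>)
next
  case (Mlt_Rinv f a)
  then obtain F where F: "F \<in> Mlt (quot_carrier S m N) (quot_mult m N)" "\<forall>x\<in>S. F (cs N x) = cs N (f x)" by blast
  show ?case
    by (rule bexI[of _ "Rtr_inv (quot_carrier S m N) (quot_mult m N) (cs N a) \<circ> F"])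
       (use F Mlt_Rinv Mlt_in RiQ QN_mem in \<open>auto intro: Mlt.Mlt_Rinv\<close>)
qed


lemma lift_up: "F \<in> Mlt (quot_carrier S m N) (quot_mult m N) \<Longrightarrow>
  \<exists>f \<in> Mlt S m. \<forall>x\<in>S. F (cs N x) = cs N (f x)"
proof (induction F rule: Mlt.induct)
  case Mlt_id show ?case by (rule bexI[of _ id]) (simp_all add: Mlt.Mlt_id)
next
  case (Mlt_L F A)
  then obtain f where f: "f \<in> Mlt S m" "\<forall>x\<in>S. F (cs N x) = cs N (f x)" by blast
  obtain a where a: "a \<in> S" "A = cs N a" using QN_cases[OF Mlt_L.hyps(2)] by auto
  show ?case
    by (rule bexI[of _ "Ltr S m a \<circ> f"]) (use f a Mlt_in LQ in \<open>auto intro: Mlt.Mlt_L\<close>)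
next
  case (Mlt_R F A)
  then obtain f where f: "f \<in> Mlt S m" "\<forall>x\<in>S. F (cs N x) = cs N (f x)" by blast
  obtain a where a: "a \<in> S" "A = cs N a" using QN_cases[OF Mlt_R.hyps(2)] by auto
  show ?case
    by (rule bexI[of _ "Rtr S m a \<circ> f"]) (use f a Mlt_in RQ in \<open>auto intro: Mlt.Mlt_R\<close>)
next
  case (Mlt_Linv F A)
  then obtain f where f: "f \<in> Mlt S m" "\<forall>x\<in>S. F (cs N x) = cs N (f x)" by blast
  obtain a where a: "a \<in> S" "A = cs N a" using QN_cases[OF Mlt_Linv.hyps(2)] by auto
  show ?case
    by (rule bexI[of _ "Ltr_inv S m a \<circ> f"]) (use f a Mlt_in LiQ in \<open>auto intro: Mlt.Mlt_Linv\<close>)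
next
  case (Mlt_Rinv F A)
  then obtain f where f: "f \<in> Mlt S m" "\<forall>x\<in>S. F (cs N x) = cs N (f x)" by blast
  obtain a where a: "a \<in> S" "A = cs N a" using QN_cases[OF Mlt_Rinv.hyps(2)] by auto
  show ?case
    by (rule bexI[of _ "Rtr_inv S m a \<circ> f"]) (use f a Mlt_in RiQ in \<open>auto intro: Mlt.Mlt_Rinv\<close>)
qed

lemma center_iff: assumes x: "x \<in> S"
  shows "cs N x \<in> center (quot_carrier S m N) (quot_mult m N) N \<longleftrightarrow> x \<in> CC N"
proof
  assume c: "cs N x \<in> center (quot_carrier S m N) (quot_mult m N) N"
  show "x \<in> CC N"
  proof (rule CC_I[OF x])
    fix t assume t: "t \<in> Inn S m u"
    obtain F where F: "F \<in> Mlt (quot_carrier S m N) (quot_mult m N)" "\<forall>y\<in>S. F (cs N y) = cs N (t y)"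
      using lift_down[OF Inn_Mlt[OF t]] by blast
    have "F N = N" using F(2) Inn_u[OF t] csu by (metis u_in)
    hence "F \<in> Inn (quot_carrier S m N) (quot_mult m N) N" using F(1) unfolding Inn_def by simp
    hence "F (cs N x) = cs N x" using c unfolding center_def by blast
    hence "cs N (t x) = cs N x" using F(2) x by simp
    thus "t x \<in> cs N x" using self_cs[OF Inn_in[OF t x]] by simp
  qed
next
  assume xc: "x \<in> CC N"
  { fix F assume Fi: "F \<in> Inn (quot_carrier S m N) (quot_mult m N) N"
    hence F1: "F \<in> Mlt (quot_carrier S m N) (quot_mult m N)" and FN: "F N = N" unfolding Inn_def by auto
    obtain f where f: "f \<in> Mlt S m" "\<forall>y\<in>S. F (cs N y) = cs N (f y)" using lift_up[OF F1] by blast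
    have fu: "f u \<in> S" using Mlt_in[OF f(1)] by simp
    have "cs N (f u) = cs N u" using f(2) FN csu by (metis u_in)
    hence fuu: "f u \<in> cs N u" using self_cs[OF fu] by simp
    have 1: "f x \<in> cs N (m (f u) x)" by (rule lemD[OF xc f(1)])
    have 2: "m (f u) x \<in> cs N x" using lemB[OF u_in x fuu self_cs[OF x]] x by simp
    have "f x \<in> cs N x" using cs_trans[OF x 2 1] .
    hence "cs N (f x) = cs N x" by (rule cs_eq[OF x])
    hence "F (cs N x) = cs N x" using f(2) x by simp }
  thus "cs N x \<in> center (quot_carrier S m N) (quot_mult m N) N"
    unfolding center_def using QN_mem[OF x] by blast
qed


lemma lemE: assumes w: "w \<in> S" and x: "x \<in> S" and y: "y \<in> S"
  and h: "w \<in> CC N \<or> x \<in> CC N \<or> y \<in> CC N"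
  shows "m (m w x) y \<in> cs N (m w (m x y))"
proof -
  { assume wc: "w \<in> CC N"
    have "(Rtr S m y \<circ> Rtr S m x) w \<in> cs N (m ((Rtr S m y \<circ> Rtr S m x) u) w)"
      by (rule lemD[OF wc Mlt_comp[OF R_Mlt[OF y] R_Mlt[OF x]]])
    hence ?thesis using w x y comm[of "m x y" w] by simp }
  moreover
  { assume yc: "y \<in> CC N"
    have "(Ltr S m w \<circ> Ltr S m x) y \<in> cs N (m ((Ltr S m w \<circ> Ltr S m x) u) y)"
      by (rule lemD[OF yc Mlt_comp[OF L_Mlt[OF w] L_Mlt[OF x]]])
    hence 1: "m w (m x y) \<in> cs N (m (m w x) y)" using w x y by simp
    have ?thesis using cs_sym[OF _ 1] w x y by simp }
  moreover
  { assume xc: "x \<in> CC N"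
    have "(Ltr S m y \<circ> Ltr S m w) x \<in> cs N (m ((Ltr S m y \<circ> Ltr S m w) u) x)"
      by (rule lemD[OF xc Mlt_comp[OF L_Mlt[OF y] L_Mlt[OF w]]])
    hence 1: "m (m w x) y \<in> cs N (m (m w y) x)" using w x y comm[of y "m w x"] comm[of y w] by simp
    have "(Ltr S m w \<circ> Ltr S m y) x \<in> cs N (m ((Ltr S m w \<circ> Ltr S m y) u) x)"
      by (rule lemD[OF xc Mlt_comp[OF L_Mlt[OF w] L_Mlt[OF y]]])
    hence 2: "m w (m x y) \<in> cs N (m (m w y) x)" using w x y comm[of y x] by simp
    have "cs N (m w (m x y)) = cs N (m (m w y) x)" by (rule cs_eq[OF _ 2]) (simp add: w x y)
    hence ?thesis using 1 by simp }
  ultimately show ?thesis using h by blast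
qed

lemma assoc_in: assumes a: "a \<in> CC N" and b: "b \<in> S" and c: "c \<in> S"
  shows "assoc S m a b c \<in> N"
proof -
  have aS: "a \<in> S" using CC_S[OF a] .
  define K where "K = m a (m b c)"
  define z where "z = assoc S m a b c"
  have KS: "K \<in> S" unfolding K_def using aS b c by simp
  have zS: "z \<in> S" and e: "m (m a b) c = m K z" unfolding z_def K_def using assoc_prop[OF aS b c] by auto
  have "m K z \<in> cs N (m K u)" using lemE[OF aS b c] a e KS unfolding K_def by simp
  hence "z \<in> cs N u" by (rule lemC[OF KS zS u_in])
  thus ?thesis unfolding z_def csu .
qed

lemma theta_cs: assumes x: "x \<in> S" and y: "y \<in> S" and h: "x \<in> CC N \<or> y \<in> CC N" and w: "w \<in> S"
  shows "rd (m x y) (m (m w x) y) \<in> cs N w"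
proof -
  define r where "r = rd (m x y) (m (m w x) y)"
  have rS: "r \<in> S" unfolding r_def using x y w by simp
  have "m r (m x y) = m (m w x) y" unfolding r_def using x y w by simp
  also have "\<dots> \<in> cs N (m w (m x y))" using lemE[OF w x y] h by blast
  finally have "m (m x y) r \<in> cs N (m (m x y) w)" using comm[of r "m x y"] comm[of w "m x y"] rS x y w by simp
  hence "r \<in> cs N w" by (rule lemC[OF m_in[OF x y] rS w])
  thus ?thesis unfolding r_def .
qed

end


lemma normal_u: "normal {u}"
proof -
  have "t u \<in> {u}" if "t \<in> Inn S m u" for t using Inn_u[OF that] by simp
  thus ?thesis unfolding normal_def using ld_m[OF u_in u_in] by auto
qed

lemma uc_Suc: assumes "normal (upper_center S m u i)"
  shows "upper_center S m u (Suc i) = CC (upper_center S m u i)"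
proof -
  let ?N = "upper_center S m u i"
  have "upper_center S m u (Suc i) = {x \<in> S. cs ?N x \<in> center (quot_carrier S m ?N) (quot_mult m ?N) ?N}"
    by (simp add: Let_def cs_def)
  also have "\<dots> = CC ?N" using center_iff[OF assms] CC_S by blast
  finally show ?thesis .
qed

lemma uc_normal: "normal (upper_center S m u i)"
proof (induction i)
  case 0 show ?case using normal_u by simp
next
  case (Suc i) show ?case using uc_Suc[OF Suc] CC_normal[OF Suc] by simp
qed

lemma central_fix: assumes c: "c \<in> CC {u}" and t: "t \<in> Inn S m u" shows "t c = c"
  using CC_D[OF c t] CC_S[OF c] by (simp add: cs_def)

lemma central_Mlt: assumes c: "c \<in> CC {u}" and f: "f \<in> Mlt S m" shows "f c = m (f u) c"
proof -
  have "f c = m (f u) ((Ltr_inv S m (f u) \<circ> f) c)" by (rule decomp[OF f CC_S[OF c]])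
  also have "(Ltr_inv S m (f u) \<circ> f) c = c" by (rule central_fix[OF c inner_part[OF f]])
  finally show ?thesis .
qed

lemma R1: assumes c: "c \<in> CC {u}" and x: "x \<in> S" and y: "y \<in> S"
  shows "m (m x c) y = m (m x y) c"
  using central_Mlt[OF c Mlt_comp[OF R_Mlt[OF y] L_Mlt[OF x]]] CC_S[OF c] x y by simp

lemma R2: assumes c: "c \<in> CC {u}" and x: "x \<in> S" and y: "y \<in> S"
  shows "m x (m y c) = m (m x y) c"
  using central_Mlt[OF c Mlt_comp[OF L_Mlt[OF x] L_Mlt[OF y]]] CC_S[OF c] x y by simp

lemma claim2: assumes t: "t \<in> Inn S m u" and tc: "\<And>w. w \<in> S \<Longrightarrow> t w \<in> cs (CC {u}) w"
  and e: "e \<in> S" and f: "f \<in> S" and g: "g \<in> S"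
  shows "t (assoc S m e f g) = assoc S m e f g"
proof -
  define z where "z = assoc S m e f g"
  define K where "K = m e (m f g)"
  define P where "P = m (m e f) g"
  have zS: "z \<in> S" and PK: "P = m K z" unfolding z_def K_def P_def using assoc_prop[OF e f g] by auto
  have KS: "K \<in> S" unfolding K_def using e f g by simp
  obtain c1 where c1: "c1 \<in> CC {u}" "t e = m e c1" using tc[OF e] unfolding cs_def by auto
  obtain c2 where c2: "c2 \<in> CC {u}" "t f = m f c2" using tc[OF f] unfolding cs_def by auto
  obtain c3 where c3: "c3 \<in> CC {u}" "t g = m g c3" using tc[OF g] unfolding cs_def by auto
  have c1S: "c1 \<in> S" and c2S: "c2 \<in> S" and c3S: "c3 \<in> S" using c1 c2 c3 CC_S by auto
  note R1' = R1[OF c1(1)] R1[OF c2(1)] R1[OF c3(1)]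
  note R2' = R2[OF c1(1)] R2[OF c2(1)] R2[OF c3(1)]
  define W where "W = m (m (m K c2) c1) c3"
  have WS: "W \<in> S" unfolding W_def using KS c1S c2S c3S by simp
  have "t P = m (m (t e) (t f)) (t g)" unfolding P_def using Inn_hom[OF t] e f g by simp
  also have "m (t e) (t f) = m (m (m e f) c2) c1"
    using c1 c2 R1[OF c1(1) e, of "m f c2"] R2[OF c2(1) e f] e f c2S by simp
  also have "m (m (m (m e f) c2) c1) (t g) = m (m (m P c2) c1) c3"
  proof -
    have "m (m (m (m e f) c2) c1) (t g) = m (m (m (m (m e f) c2) c1) g) c3"
      using c3 R2[OF c3(1), of "m (m (m e f) c2) c1" g] e f g c1S c2S by simp
    also have "m (m (m (m e f) c2) c1) g = m (m (m (m e f) c2) g) c1"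
      using R1[OF c1(1), of "m (m e f) c2" g] e f g c2S by simp
    also have "m (m (m e f) c2) g = m P c2"
      using R1[OF c2(1), of "m e f" g] e f g unfolding P_def by simp
    finally show ?thesis .
  qed
  also have "\<dots> = m W z"
  proof -
    have "m P c2 = m (m K c2) z" unfolding PK using R1[OF c2(1) KS zS] by simp
    moreover have "m (m (m K c2) z) c1 = m (m (m K c2) c1) z" using R1[OF c1(1), of "m K c2" z] KS zS c2S by simp
    moreover have "m (m (m (m K c2) c1) z) c3 = m W z"
      using R1[OF c3(1), of "m (m K c2) c1" z] KS zS c1S c2S unfolding W_def by simp
    ultimately show ?thesis by simp
  qed
  finally have L: "t P = m W z" .
  have "t P = m (t K) (t z)" unfolding PK using Inn_hom[OF t KS zS] .
  also have "t K = m (t e) (m (t f) (t g))" unfolding K_def using Inn_hom[OF t] e f g by simp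
  also have "m (t f) (t g) = m (m (m f g) c2) c3"
    using c2 c3 R2[OF c3(1), of "m f c2" g] R1[OF c2(1) f g] f g c2S by simp
  also have "m (t e) (m (m (m f g) c2) c3) = W"
  proof -
    have "m (t e) (m (m (m f g) c2) c3) = m (m e (m (m (m f g) c2) c3)) c1"
      using c1 R1[OF c1(1), of e "m (m (m f g) c2) c3"] e f g c2S c3S by simp
    also have "m e (m (m (m f g) c2) c3) = m (m e (m (m f g) c2)) c3"
      using R2[OF c3(1), of e "m (m f g) c2"] e f g c2S by simp
    also have "m e (m (m f g) c2) = m K c2"
      using R2[OF c2(1), of e "m f g"] e f g unfolding K_def by simp
    also have "m (m (m K c2) c3) c1 = W"
      using R1[OF c3(1), of "m K c2" c1] KS c1S c2S unfolding W_def by simp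
    finally show ?thesis .
  qed
  finally have "m W z = m W (t z)" using L by simp
  hence "z = t z" using cancelL[OF WS zS Inn_in[OF t zS]] by simp
  thus ?thesis unfolding z_def by simp
qed


lemma main_loc: assumes top: "upper_center S m u 3 = S"
  and a: "a \<in> S" and b: "b \<in> S" and c: "c \<in> S" and d: "d \<in> S"
  and e: "e \<in> S" and f: "f \<in> S" and g: "g \<in> S"
  shows "assoc S m a (assoc S m b c d) (assoc S m e f g) = u
    \<and> assoc S m (assoc S m a b c) d (assoc S m e f g) = u
    \<and> assoc S m (assoc S m a b c) (assoc S m d e f) g = u"
proof -
  define Z1 where "Z1 = upper_center S m u 1"
  define Z2 where "Z2 = upper_center S m u 2"
  have n1: "normal Z1" and n2: "normal Z2" unfolding Z1_def Z2_def by (rule uc_normal)+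
  have uc1: "Z1 = CC {u}" unfolding Z1_def using uc_Suc[OF uc_normal, of 0] by simp
  have uc2: "Z2 = CC Z1" unfolding Z1_def Z2_def using uc_Suc[OF uc_normal, of 1] by (simp add: numeral_2_eq_2)
  have uc3: "S = CC Z2" unfolding Z2_def using uc_Suc[OF uc_normal, of 2] top by (simp add: numeral_3_eq_3 numeral_2_eq_2)
  have Z2S: "x \<in> Z2 \<Longrightarrow> x \<in> S" for x using uc2 CC_S by blast
  have asZ2: "assoc S m x y z \<in> Z2" if "x \<in> S" "y \<in> S" "z \<in> S" for x y z
    using assoc_in[OF n2 _ that(2,3)] that(1) uc3 by blast
  have fixA: "m (m (assoc S m e' f' g') x) y = m (assoc S m e' f' g') (m x y)"
    if x: "x \<in> S" and y: "y \<in> S" and h: "x \<in> Z2 \<or> y \<in> Z2" and e': "e' \<in> S" and f': "f' \<in> S" and g': "g' \<in> S"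
    for x y e' f' g'
  proof -
    define A where "A = assoc S m e' f' g'"
    have AS: "A \<in> S" unfolding A_def using assoc_prop[OF e' f' g'] by simp
    define t where "t = Rtr_inv S m (m x y) \<circ> (Rtr S m y \<circ> Rtr S m x)"
    have tM: "t \<in> Mlt S m" unfolding t_def by (rule Mlt_comp[OF Ri_Mlt Mlt_comp[OF R_Mlt R_Mlt]]) (simp_all add: x y)
    have tw: "t w = rd (m x y) (m (m w x) y)" if "w \<in> S" for w unfolding t_def using that x y by simp
    have "t u = u" using tw[OF u_in] rd_m[OF m_in[OF x y] u_in] x y by simp
    hence tI: "t \<in> Inn S m u" using tM unfolding Inn_def by simp
    have tc: "t w \<in> cs (CC {u}) w" if "w \<in> S" for w
      using theta_cs[OF n1 x y _ that] h uc2 uc1 tw[OF that] by simp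
    have "t A = A" unfolding A_def by (rule claim2[OF tI tc e' f' g'])
    hence "rd (m x y) (m (m A x) y) = A" using tw[OF AS] by simp
    hence "m (m A x) y = m A (m x y)" using rd_eq[of "m x y" "m (m A x) y"] AS x y by simp
    thus ?thesis unfolding A_def .
  qed
  define P where "P = assoc S m a b c"
  define P' where "P' = assoc S m b c d"
  define Q where "Q = assoc S m e f g"
  define Q' where "Q' = assoc S m d e f"
  have PZ: "P \<in> Z2" and P'Z: "P' \<in> Z2" and QZ: "Q \<in> Z2" and Q'Z: "Q' \<in> Z2"
    unfolding P_def P'_def Q_def Q'_def using asZ2 a b c d e f g by auto
  have PS: "P \<in> S" and P'S: "P' \<in> S" and QS: "Q \<in> S" and Q'S: "Q' \<in> S"
    using PZ P'Z QZ Q'Z Z2S by auto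
  have 1: "assoc S m a P' Q = u"
  proof (rule assoc_u[OF a P'S QS])
    have h: "m (m Q P') a = m Q (m P' a)" using fixA[OF P'S a _ e f g] P'Z unfolding Q_def by simp
    have "m (m a P') Q = m Q (m P' a)" using comm[OF a P'S] comm[of "m P' a" Q] a P'S QS by simp
    also have "\<dots> = m (m Q P') a" using h by simp
    also have "\<dots> = m a (m P' Q)" using comm[of "m Q P'" a] comm[OF QS P'S] a P'S QS by simp
    finally show "m (m a P') Q = m a (m P' Q)" .
  qed
  have 2: "assoc S m P d Q = u"
    by (rule assoc_u[OF PS d QS]) (use fixA[OF d QS _ a b c] QZ in \<open>simp add: P_def\<close>)
  have 3: "assoc S m P Q' g = u"
    by (rule assoc_u[OF PS Q'S g]) (use fixA[OF Q'S g _ a b c] Q'Z in \<open>simp add: P_def\<close>)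
  show ?thesis using 1 2 3 unfolding P_def P'_def Q_def Q'_def by simp
qed

end

theorem lemma2p6:
  fixes S :: "'a set" and m :: "'a \<Rightarrow> 'a \<Rightarrow> 'a" and u :: 'a
  assumes "commutative_loop S m u"
    and "automorphic S m u"
    and "nilpotency_class S m u 3"
    and "a \<in> S" "b \<in> S" "c \<in> S" "d \<in> S" "e \<in> S" "f \<in> S" "g \<in> S"
  shows "assoc S m a (assoc S m b c d) (assoc S m e f g) = u
    \<and> assoc S m (assoc S m a b c) d (assoc S m e f g) = u
    \<and> assoc S m (assoc S m a b c) (assoc S m d e f) g = u"
proof -
  interpret CAL S m u using assms(1,2) by unfold_locales
  have "upper_center S m u 3 = S" using assms(3) unfolding nilpotency_class_def by simp
  thus ?thesis using main_loc assms(4-10) by blast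
qed

end
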